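(* For every integer $k > 1$, $\lfloor \log_2 (k-1) \rfloor \leq \operatorname{VCdim}(\mathcal{H}^k) \leq k$.
   Context: For $\sigma \in \{0,1\}^k$, let $h_\sigma$ be the classifier on binary strings with $h_\sigma(s) = 1$ iff $\sigma$ is a subsequence of $s$ (there exist indices $i_1 < \dots < i_k$ with $s_{i_j} = \sigma_j$), and $0$ otherwise. $\mathcal{H}^k = \{h_\sigma : \sigma \in \{0,1\}^k\}$, viewed as a hypothesis class on the set of all finite binary strings. A set $B$ of strings is shattered by $\mathcal{H}^k$ if for every $B' \subseteq B$ there is $h \in \mathcal{H}^k$ with $B \cap h^{-1}(1) = B'$; $\operatorname{VCdim}(\mathcal{H}^k)$ is the largest size of a shattered set. *)

theory Defs
  imports "HOL-Library.Sublist" "HOL-Library.Extended_Nat" Complex_Main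
begin

definition h :: "bool list \<Rightarrow> bool list \<Rightarrow> bool" where
  "h \<sigma> s \<longleftrightarrow> subseq \<sigma> s"

definition Hk :: "nat \<Rightarrow> (bool list \<Rightarrow> bool) set" where
  "Hk k = {h \<sigma> | \<sigma>. length \<sigma> = k}"

definition shatters :: "('a \<Rightarrow> bool) set \<Rightarrow> 'a set \<Rightarrow> bool" where
  "shatters H B \<longleftrightarrow> (\<forall>B' \<subseteq> B. \<exists>f \<in> H. B \<inter> {x. f x} = B')"

definition VCdim :: "('a \<Rightarrow> bool) set \<Rightarrow> enat" where
  "VCdim H = Sup {enat (card B) | B. finite B \<and> shatters H B}"

end

theory Submission
  imports Defs
begin

fun g :: "nat set \<Rightarrow> nat \<Rightarrow> bool list" where
  "g T 0 = (if 0 \<in> T then [True] else [])"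
| "g T (Suc n) = (if 0 \<in> T then [True] else []) @ False # g {x. Suc x \<in> T} n"

lemma g_count: "length (filter Not (g T n)) = n"
  by (induction n arbitrary: T) auto

definition sig :: "nat \<Rightarrow> nat \<Rightarrow> bool list" where
  "sig n a = replicate a False @ True # replicate (n - a) False"

lemma sig_count: "a \<le> n \<Longrightarrow> length (filter Not (sig n a)) = n"
  by (simp add: sig_def)

lemma count_mono: "subseq xs ys \<Longrightarrow> length (filter Not xs) \<le> length (filter Not ys)"
  using list_emb_length subseq_filter by blast

lemma rep_sub: "subseq (replicate n False) (g T n)"
proof -
  have "filter Not (g T n) = replicate n False"
    by (induction n arbitrary: T) auto
  then show ?thesis by (metis subseq_filter_left)
qed

lemma key: "a \<le> n \<Longrightarrow> subseq (sig n a) (g T n) \<longleftrightarrow> a \<in> T"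
proof (induction n arbitrary: T a)
  case 0
  then show ?case by (simp add: sig_def)
next
  case (Suc n)
  let ?T = "{x. Suc x \<in> T}"
  show ?case
  proof (cases a)
    case 0
    have nc: "\<not> subseq (sig (Suc n) 0) (g ?T n)"
      using count_mono[of "sig (Suc n) 0" "g ?T n"] g_count[of ?T n] sig_count[of 0 "Suc n"] by fastforce
    show ?thesis using 0 nc rep_sub[of n ?T] by (simp add: sig_def)
  next
    case (Suc a')
    have nc: "\<not> subseq (sig (Suc n) a) (g ?T n)"
      using count_mono[of "sig (Suc n) a" "g ?T n"] g_count[of ?T n] sig_count[of a "Suc n"] Suc.prems by fastforce
    have e: "sig (Suc n) a = False # sig n a'" using Suc by (simp add: sig_def)
    have "a' \<le> n" using Suc Suc.prems by simp
    then show ?thesis using nc e Suc.IH[of a' ?T] Suc by auto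
  qed
qed

lemma upper: "VCdim (Hk k) \<le> enat k"
  unfolding VCdim_def
proof (rule Sup_least, clarify)
  fix B :: "bool list set" assume fB: "finite B" and sh: "shatters (Hk k) B"
  have fH: "finite (Hk k)" and cH: "card (Hk k) \<le> 2 ^ k"
  proof -
    have eq: "Hk k = h ` {xs. set xs \<subseteq> UNIV \<and> length xs = k}" unfolding Hk_def by auto
    have "finite {xs::bool list. set xs \<subseteq> UNIV \<and> length xs = k}" by (rule finite_lists_length_eq) simp
    then show "finite (Hk k)" using eq by simp
    have "card (Hk k) \<le> card {xs::bool list. set xs \<subseteq> UNIV \<and> length xs = k}"
      unfolding eq by (rule card_image_le) fact
    also have "\<dots> = 2 ^ k" by (subst card_lists_length_eq) (auto simp: card_UNIV_bool)
    finally show "card (Hk k) \<le> 2 ^ k" .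
  qed
  have "\<forall>B'\<in>Pow B. \<exists>f \<in> Hk k. B \<inter> {x. f x} = B'" using sh unfolding shatters_def by auto
  then obtain F where F: "\<And>B'. B' \<in> Pow B \<Longrightarrow> F B' \<in> Hk k \<and> B \<inter> {x. F B' x} = B'" by metis
  have "inj_on F (Pow B)"
    by (rule inj_onI) (metis F)
  moreover have "F ` Pow B \<subseteq> Hk k" using F by auto
  ultimately have "card (Pow B) \<le> card (Hk k)" using fH by (meson card_inj_on_le)
  then have "(2::nat) ^ card B \<le> card (Hk k)" using fB by (simp add: card_Pow)
  then have "(2::nat) ^ card B \<le> 2 ^ k" using cH by linarith
  then have "card B \<le> k" by simp
  then show "enat (card B) \<le> enat k" by simp
qed

lemma lower_aux:
  assumes "2 ^ m \<le> k - 1" and "k > 1"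
  shows "enat m \<le> VCdim (Hk k)"
proof -
  have "card (Pow {..<m}) \<le> card {..<k}" using assms by (simp add: card_Pow)
  then obtain enc where enc: "enc ` Pow {..<m} \<subseteq> {..<k}" "inj_on enc (Pow {..<m})"
    using card_le_inj[of "Pow {..<m}" "{..<k}"] by auto
  define T where "T i = {enc S | S. S \<subseteq> {..<m} \<and> i \<in> S}" for i
  define s where "s i = g (T i) (k - 1)" for i
  have memT: "enc S \<in> T i \<longleftrightarrow> i \<in> S" if "S \<subseteq> {..<m}" for S i
    using that enc(2) unfolding T_def inj_on_def by auto
  have hs: "h (sig (k - 1) (enc S)) (s i) \<longleftrightarrow> i \<in> S" if "S \<subseteq> {..<m}" for S i
  proof -
    have "enc S \<in> {..<k}" using enc(1) that by auto
    then have "enc S \<le> k - 1" by simp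
    then show ?thesis unfolding h_def s_def using key memT[OF that] by simp
  qed
  have lens: "length (sig (k - 1) (enc S)) = k" if "S \<subseteq> {..<m}" for S
  proof -
    have "enc S \<in> {..<k}" using enc(1) that by auto
    then have "enc S \<le> k - 1" by simp
    then show ?thesis using assms by (simp add: sig_def)
  qed
  define B where "B = s ` {..<m}"
  have inj: "inj_on s {..<m}"
  proof (rule inj_onI)
    fix i j assume "i \<in> {..<m}" "j \<in> {..<m}" "s i = s j"
    then show "i = j" using hs[of "{i}" i] hs[of "{i}" j] by auto
  qed
  have cB: "card B = m" unfolding B_def using inj by (simp add: card_image)
  have sh: "shatters (Hk k) B"
    unfolding shatters_def
  proof (intro allI impI)
    fix B' assume "B' \<subseteq> B"
    define S where "S = {i \<in> {..<m}. s i \<in> B'}"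
    have S: "S \<subseteq> {..<m}" unfolding S_def by auto
    have "h (sig (k - 1) (enc S)) \<in> Hk k" unfolding Hk_def using lens[OF S] by auto
    moreover have "B \<inter> {x. h (sig (k - 1) (enc S)) x} = B'"
      using hs[OF S] \<open>B' \<subseteq> B\<close> unfolding B_def S_def by auto
    ultimately show "\<exists>f\<in>Hk k. B \<inter> {x. f x} = B'" by blast
  qed
  have "finite B" unfolding B_def by simp
  then show ?thesis unfolding VCdim_def using sh cB by (intro Sup_upper) auto
qed

theorem mainTheorem11:
  fixes k :: nat
  assumes "k > 1"
  shows "enat (nat \<lfloor>log 2 (real k - 1)\<rfloor>) \<le> VCdim (Hk k) \<and> VCdim (Hk k) \<le> enat k"
proof
  define m where "m = nat \<lfloor>log 2 (real k - 1)\<rfloor>"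
  have x1: "real k - 1 \<ge> 1" using assms by simp
  have lg: "log 2 (real k - 1) \<ge> 0" using x1 by simp
  have "real m \<le> log 2 (real k - 1)" unfolding m_def using lg by linarith
  then have "2 powr real m \<le> 2 powr log 2 (real k - 1)" by simp
  also have "\<dots> = real k - 1" using x1 by simp
  finally have "real (2 ^ m) \<le> real (k - 1)" using assms by (simp add: powr_realpow of_nat_diff)
  then have "2 ^ m \<le> k - 1" by linarith
  then show "enat m \<le> VCdim (Hk k)" using lower_aux assms by blast
  show "VCdim (Hk k) \<le> enat k" by (rule upper)
qed

end
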